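(* For every prime $p$: (i) $\{(r,e,d)\in\mathscr{U}(p)\mid p\mid r,\ \det M_d((x^r-x-1)^e)\ne0\}=\{(r,e,d)\in\mathscr{B}(p)\mid p\mid r\}$; (ii) $\{(r,e,d)\in\mathscr{U}(p)\mid p<r,\ p\nmid r,\ \det M_d((x^r-1)^e)\ne0\}=\{(r,e,d)\in\mathscr{B}(p)\mid p<r,\ p\nmid r\}$; (iii) $\{(r,e,d)\in\mathscr{U}(p)\mid 2\le r\le p-1,\ r\nmid p-1,\ \det M_d((x^r-1)^e)\ne0\}=\{(r,e,d)\in\mathscr{B}(p)\mid 2\le r\le p-1,\ r\nmid p-1\}$.
   Context: Let $p$ be a prime. For a polynomial $h(x)\in\mathbb{F}_p[x]$ and integers $e\ge0$, $0\le d\le p$, write $h(x)^e=\sum_{i\ge0}c_ix^i$ ($c_i=0$ for $i<0$) and let $M_d(h(x)^e)$ be the $d\times d$ matrix with $(i,j)$ entry $c_{ip+j-d-1}$; in particular $M_d((x^r-1)^e)$, $M_d((x^r-x-1)^e)$ are these matrices for $h=x^r-1$, $h=x^r-x-1$. For integer triples put $g=\left\{red-\frac{d(d+1)}{2}(p-1)\right\}\big/\frac{r(r-1)}{2}\in\mathbb{Q}$. $\mathscr{U}(p)$ is the set of integer triples $(r,e,d)$ with $r\ge2$, $e\ge1$, $1\le d\le p$, $d(p-1)\le re\le r(p-1)$, $g>0$, and $g\in2\mathbb{Z}$ if $p\ne2$, $g\in\mathbb{Z}$ if $p=2$. $\mathscr{B}(p)=\mathscr{B}_+(p)\cup\mathscr{B}_0(p)\cup\mathscr{B}_-(p)$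 where $\mathscr{B}_+(p)=\{(r,e,d): 2\le r\le p,\ e=p-1,\ d=r\}$, $\mathscr{B}_0(p)=\{(r,e,d): 2\le r\le p+1,\ (p-1)/2<e\le p-1,\ r(p-1-e)\le p-1,\ d=r-1\}$, $\mathscr{B}_-(p)=\{(r,e,d): r\ge2,\ (p-1)/2<e\le p-1,\ r(p-1-e)=p-1,\ d=r-2\}$ (integer triples). *)

theory Defs
  imports "Berlekamp_Zassenhaus.Finite_Field" "Jordan_Normal_Form.Determinant"
begin

definition cpow :: "'a::comm_ring_1 poly \<Rightarrow> nat \<Rightarrow> int \<Rightarrow> 'a" where
  "cpow h e k = (if k < 0 then 0 else coeff (h ^ e) (nat k))"

text \<open>M_d(h^e) for the prime p: entry (i,j), 1 <= i,j <= d, is c_{ip+j-d-1}.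
  Jordan_Normal_Form matrices are 0-indexed, so entry (i,j) with i,j < d
  is c_{(i+1)p+(j+1)-d-1}.\<close>
definition Mmat :: "'a::comm_ring_1 poly \<Rightarrow> nat \<Rightarrow> int \<Rightarrow> nat \<Rightarrow> 'a mat" where
  "Mmat h e p d = mat d d (\<lambda>(i,j). cpow h e ((int i + 1) * p + (int j + 1) - int d - 1))"

definition hA :: "nat \<Rightarrow> 'a::comm_ring_1 poly" where
  "hA r = monom 1 r - 1"
definition hB :: "nat \<Rightarrow> 'a::comm_ring_1 poly" where
  "hB r = monom 1 r - monom 1 1 - 1"

definition gval :: "int \<Rightarrow> int \<Rightarrow> int \<Rightarrow> int \<Rightarrow> rat" where
  "gval p r e d = (of_int (r*e*d) - of_int (d*(d+1)) / 2 * of_int (p-1)) / (of_int (r*(r-1)) / 2)"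

definition Uset :: "int \<Rightarrow> (int \<times> int \<times> int) set" where
  "Uset p = {(r,e,d). r \<ge> 2 \<and> e \<ge> 1 \<and> 1 \<le> d \<and> d \<le> p \<and> d*(p-1) \<le> r*e \<and> r*e \<le> r*(p-1)
     \<and> gval p r e d > 0
     \<and> (if p \<noteq> 2 then (\<exists>k::int. gval p r e d = of_int (2*k)) else (\<exists>k::int. gval p r e d = of_int k))}"

definition Bplus :: "int \<Rightarrow> (int \<times> int \<times> int) set" where
  "Bplus p = {(r,e,d). 2 \<le> r \<and> r \<le> p \<and> e = p - 1 \<and> d = r}"
definition Bzero :: "int \<Rightarrow> (int \<times> int \<times> int) set" where
  "Bzero p = {(r,e,d). 2 \<le> r \<and> r \<le> p + 1 \<and> (of_int (p-1) :: rat) / 2 < of_int e \<and> e \<le> p - 1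
      \<and> r*(p-1-e) \<le> p - 1 \<and> d = r - 1}"
definition Bminus :: "int \<Rightarrow> (int \<times> int \<times> int) set" where
  "Bminus p = {(r,e,d). 2 \<le> r \<and> (of_int (p-1) :: rat) / 2 < of_int e \<and> e \<le> p - 1
      \<and> r*(p-1-e) = p - 1 \<and> d = r - 2}"
definition Bset :: "int \<Rightarrow> (int \<times> int \<times> int) set" where
  "Bset p = Bplus p \<union> Bzero p \<union> Bminus p"

end

theory Submission
  imports Defs
begin


lemma hA_alt: "(hA r :: 'a::comm_ring_1 poly) = monom 1 r + [:-1:]"
  unfolding hA_def by (simp add: one_pCons)

lemma hA_pow: "(hA r :: 'a::comm_ring_1 poly)^e =
   (\<Sum>k\<le>e. monom (of_nat (e choose k) * (-1)^(e-k)) (r*k))"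
  unfolding hA_alt binomial_ring
proof (intro sum.cong refl)
  fix k assume "k \<in> {..e}"
  have a: "monom (1::'a) r ^ k = monom 1 (r*k)" by (simp add: monom_power mult.commute)
  have b: "[:-1:] ^ (e-k) = [:(-1)^(e-k) :: 'a:]" by (simp add: poly_const_pow)
  have c: "(of_nat (e choose k) :: 'a poly) = [:of_nat (e choose k):]" by (simp add: of_nat_poly)
  have d: "[:x:] * monom 1 n * [:y:] = monom (x*y) n" for x y :: 'a and n
    by (simp add: smult_monom mult.commute)
  show "(of_nat (e choose k) :: 'a poly) * monom 1 r ^ k * [:-1:] ^ (e - k) = monom (of_nat (e choose k) * (- 1) ^ (e - k)) (r * k)"
    by (simp only: a b c d)
qed

lemma coeff_hA_pow:
  assumes "r \<ge> 1"
  shows "coeff ((hA r :: 'a::comm_ring_1 poly)^e) n =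
    (if r dvd n \<and> n div r \<le> e then of_nat (e choose (n div r)) * (-1)^(e - n div r) else 0)"
proof -
  have "coeff ((hA r :: 'a poly)^e) n = (\<Sum>k\<le>e. if k = n div r \<and> r dvd n then of_nat (e choose k) * (-1)^(e-k) else 0)"
    unfolding hA_pow coeff_sum coeff_monom
    by (intro sum.cong refl) (use assms in auto)
  also have "\<dots> = (if r dvd n \<and> n div r \<le> e then of_nat (e choose (n div r)) * (-1)^(e - n div r) else 0)"
    by (cases "r dvd n") (auto simp: sum.delta)
  finally show ?thesis .
qed

lemma lin: "([:1,1:] :: 'a::comm_ring_1 poly) = monom 1 1 + 1"
  by (simp add: monom_Suc one_pCons)
lemma hB_alt: "(hB r :: 'a::comm_ring_1 poly) = monom 1 r + (- [:1,1:])"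
  unfolding hB_def lin by (simp add: algebra_simps)
lemma coeff_lin_pow: "coeff ([:1,1:]^m :: 'a::comm_ring_1 poly) t = of_nat (m choose t)"
proof (cases "t \<le> m")
  case True then show ?thesis by (simp add: coeff_linear_poly_power)
next
  case False
  have "degree ([:1,1:]^m :: 'a poly) \<le> m"
    by (rule order.trans[OF degree_power_le]) simp
  then show ?thesis using False by (simp add: coeff_eq_0 binomial_eq_0)
qed


lemma hB_pow: "(hB r :: 'a::comm_ring_1 poly)^e =
   (\<Sum>k\<le>e. smult (of_nat (e choose k) * (-1)^(e-k)) (monom 1 (r*k) * [:1,1:]^(e-k)))"
proof -
  have m1: "(-1 :: 'a poly)^m = [:(-1)^m:]" for m
    by (induction m) auto
  show ?thesis
    unfolding hB_alt binomial_ring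
  proof (intro sum.cong refl)
    fix k assume "k \<in> {..e}"
    have a: "monom (1::'a) r ^ k = monom 1 (r*k)" by (simp add: monom_power mult.commute)
    have b: "(- [:1,1:] :: 'a poly) ^ (e-k) = smult ((-1)^(e-k)) ([:1,1:]^(e-k))"
      by (subst power_minus) (simp add: m1)
    have c: "(of_nat (e choose k) :: 'a poly) = [:of_nat (e choose k):]" by (simp add: of_nat_poly)
    have d: "[:x:] * M * smult y Q = smult (x*y) (M * Q)" for x y :: 'a and M Q :: "'a poly"
      by (simp add: mult_smult_right mult_smult_left smult_smult mult.commute)
    show "(of_nat (e choose k) :: 'a poly) * monom 1 r ^ k * (- [:1, 1:]) ^ (e - k) =
      smult (of_nat (e choose k) * (- 1) ^ (e - k)) (monom 1 (r * k) * [:1, 1:] ^ (e - k))"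
      by (simp only: a b c d)
  qed
qed


lemma coeff_hB_pow:
  assumes "e < r"
  shows "coeff ((hB r :: 'a::comm_ring_1 poly)^e) n =
    (if n div r \<le> e then of_nat (e choose (n div r)) * (-1)^(e - n div r) * of_nat ((e - n div r) choose (n mod r)) else 0)"
proof -
  have "coeff ((hB r :: 'a poly)^e) n = (\<Sum>k\<le>e. if k = n div r then of_nat (e choose k) * (-1)^(e-k) * of_nat ((e - k) choose (n mod r)) else 0)"
    unfolding hB_pow coeff_sum coeff_smult coeff_monom_mult coeff_lin_pow
  proof (intro sum.cong refl)
    fix k assume k: "k \<in> {..e}"
    show "of_nat (e choose k) * (-1) ^ (e - k) * (if r * k \<le> n then 1 * of_nat (e - k choose (n - r * k)) else 0) =
         (if k = n div r then of_nat (e choose k) * (-1) ^ (e - k) * of_nat (e - k choose (n mod r)) else (0::'a))"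
    proof (cases "k = n div r")
      case True
      then show ?thesis by (simp add: minus_mod_eq_mult_div [symmetric] mult.commute)
    next
      case False
      show ?thesis
      proof (cases "r * k \<le> n")
        case True
        with False have "k < n div r"
          using assms by (metis div_le_mono le_neq_implies_less mult.commute nonzero_mult_div_cancel_left not_less0 order_less_trans zero_less_iff_neq_zero)
        then have "r * (k+1) \<le> n" using assms
          by (metis Suc_eq_plus1 Suc_leI div_le_mono2 less_mult_imp_div_less linorder_not_le mult.commute zero_less_iff_neq_zero)
        then have "e - k < n - r*k" using assms by (simp add: algebra_simps)
        then show ?thesis using False True by (simp add: binomial_eq_0)
      qed (use False in simp)
    qed
  qed
  also have "\<dots> = (if n div r \<le> e then of_nat (e choose (n div r)) * (-1)^(e - n div r) * of_nat ((e - n div r) choose (n mod r)) else 0)"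
    by (auto simp: sum.delta)
  finally show ?thesis .
qed

lemma det_zero_row:
  fixes A :: "'a::comm_ring_1 mat"
  assumes A: "A \<in> carrier_mat n n" and k: "k < n" and z: "\<And>j. j < n \<Longrightarrow> A $$ (k,j) = 0"
  shows "det A = 0"
  unfolding det_def'[OF A]
proof (rule sum.neutral, intro ballI)
  fix p assume "p \<in> {p. p permutes {0..<n}}"
  then have p: "p permutes {0..<n}" by simp
  have "p k < n" using permutes_in_image[OF p] k by simp
  then have "A $$ (k, p k) = 0" using z by simp
  then have "(\<Prod>i = 0..<n. A $$ (i, p i)) = 0"
    using k by (intro prod_zero) (auto intro!: bexI[of _ k])
  then show "signof p * (\<Prod>i = 0..<n. A $$ (i, p i)) = 0" by simp
qed

lemma det_unique_perm:
  fixes A :: "'a::idom mat"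
  assumes A: "A \<in> carrier_mat n n" and s: "s permutes {0..<n}"
    and nz: "\<And>i. i < n \<Longrightarrow> A $$ (i, s i) \<noteq> 0"
    and uniq: "\<And>p. p permutes {0..<n} \<Longrightarrow> (\<And>i. i < n \<Longrightarrow> A $$ (i, p i) \<noteq> 0) \<Longrightarrow> p = s"
  shows "det A \<noteq> 0"
proof -
  let ?f = "\<lambda>p. signof p * (\<Prod>i = 0..<n. A $$ (i, p i)) :: 'a"
  have fin: "finite {p. p permutes {0..<n}}" by (simp add: finite_permutations)
  have "det A = ?f s + (\<Sum>p\<in>{p. p permutes {0..<n}} - {s}. ?f p)"
    unfolding det_def'[OF A] using s fin by (simp add: sum.remove)
  also have "(\<Sum>p\<in>{p. p permutes {0..<n}} - {s}. ?f p) = 0"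
  proof (rule sum.neutral, intro ballI)
    fix p assume "p \<in> {p. p permutes {0..<n}} - {s}"
    then have p: "p permutes {0..<n}" "p \<noteq> s" by auto
    then obtain i where "i < n" "A $$ (i, p i) = 0" using uniq by blast
    then have "(\<Prod>i = 0..<n. A $$ (i, p i)) = 0" by (intro prod_zero) auto
    then show "?f p = 0" by simp
  qed
  finally have "det A = ?f s" by simp
  moreover have "(\<Prod>i = 0..<n. A $$ (i, s i)) \<noteq> 0" using nz by (simp add: prod_zero_iff)
  moreover have "(signof s :: 'a) \<noteq> 0"
  proof
    assume z: "(signof s :: 'a) = 0"
    have "(signof s :: 'a) \<in> {1, -1}" by (rule signof_pm_one)
    then show False using z by (auto simp: eq_neg_iff_add_eq_0)
  qed
  ultimately show ?thesis by simp
qed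

lemma permutes_of_inj:
  fixes s :: "nat \<Rightarrow> nat"
  assumes "\<And>i. i < n \<Longrightarrow> s i < n" and "inj_on s {0..<n}" and "\<And>i. i \<ge> n \<Longrightarrow> s i = i"
  shows "s permutes {0..<n}"
proof (rule bij_imp_permutes)
  have "s ` {0..<n} = {0..<n}"
    using assms by (intro endo_inj_surj) auto
  then show "bij_betw s {0..<n} {0..<n}" using assms(2) by (simp add: bij_betw_def)
qed (use assms in auto)

lemma twice_sum: "2 * (\<Sum>i\<in>{0..<n}. i) = (n::nat) * (n - 1)"
proof (induction n)
  case (Suc n) thus ?case by (cases n) (simp_all add: algebra_simps)
qed simp

lemma antidiag_unique:
  fixes n :: nat
  assumes p: "p permutes {0..<n}" and le: "\<And>i. i < n \<Longrightarrow> i + p i \<le> n - 1"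
  shows "\<And>i. i < n \<Longrightarrow> p i = n - 1 - i"
proof (rule ccontr)
  fix i0 assume i0: "i0 < n" "p i0 \<noteq> n - 1 - i0"
  then have lt: "i0 + p i0 < n - 1" using le[OF i0(1)] by simp
  have "(\<Sum>i\<in>{0..<n}. p i) = (\<Sum>i\<in>{0..<n}. i)"
    using sum.permute[OF p, of "\<lambda>i. i"] by (simp add: comp_def)
  then have "(\<Sum>i\<in>{0..<n}. i + p i) = n * (n - 1)"
    using twice_sum[of n] by (simp add: sum.distrib)
  moreover have "(\<Sum>i\<in>{0..<n}. i + p i) < (\<Sum>i\<in>{0..<n}. n - 1)"
    using le lt i0 by (intro sum_strict_mono_ex1) auto
  ultimately show False by simp
qed

lemma binom_nz:
  assumes "e < CARD('p::prime_card)" and k: "k \<le> e"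
  shows "(of_nat (e choose k) :: 'p mod_ring) \<noteq> 0"
proof
  assume "(of_nat (e choose k) :: 'p mod_ring) = 0"
  then have d: "CARD('p) dvd (e choose k)" by (simp add: of_nat_eq_0_iff_char_dvd)
  have "CARD('p) dvd fact e" using binomial_fact_lemma[OF k] d
    by (metis dvd_mult_left dvd_trans dvd_triv_right mult.commute)
  then show False using assms prime_dvd_fact_iff[OF prime_card[where 'a='p]] by simp
qed

lemma Mmat_entry: "i < D \<Longrightarrow> j < D \<Longrightarrow> Mmat h E p D $$ (i,j) = cpow h E ((int i + 1) * p + (int j + 1) - int D - 1)"
  unfolding Mmat_def by simp

lemma Mmat_carrier: "Mmat h E p D \<in> carrier_mat D D"
  unfolding Mmat_def by simp

lemma gval_eq:
  assumes "r \<ge> 2"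
  shows "gval p r e d = of_int (2*r*e*d - d*(d+1)*(p-1)) / of_int (r*(r-1))"
proof -
  have "(of_int (r*(r-1)) :: rat) \<noteq> 0" using assms by simp
  then show ?thesis unfolding gval_def by (simp add: field_simps)
qed

lemma gval_int_iff:
  assumes "r \<ge> 2"
  shows "gval p r e d = of_int k \<longleftrightarrow> 2*r*e*d - d*(d+1)*(p-1) = k * (r*(r-1))"
proof -
  have nz: "(of_int (r*(r-1)) :: rat) \<noteq> 0" using assms by simp
  have "gval p r e d = of_int k \<longleftrightarrow> (of_int (2*r*e*d - d*(d+1)*(p-1)) :: rat) = of_int k * of_int (r*(r-1))"
    unfolding gval_eq[OF assms] by (rule nonzero_divide_eq_eq[OF nz])
  also have "\<dots> \<longleftrightarrow> 2*r*e*d - d*(d+1)*(p-1) = k * (r*(r-1))"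
    by (simp only: of_int_mult[symmetric] of_int_eq_iff)
  finally show ?thesis .
qed

lemma gval_pos_iff:
  assumes "r \<ge> 2"
  shows "gval p r e d > 0 \<longleftrightarrow> 2*r*e*d - d*(d+1)*(p-1) > 0"
proof -
  have pos: "(of_int (r*(r-1)) :: rat) > 0" using assms by simp
  let ?x = "2*r*e*d - d*(d+1)*(p-1)"
  have "(of_int ?x :: rat) / of_int (r*(r-1)) > 0 \<longleftrightarrow> ?x > 0"
  proof
    assume "?x > 0"
    then have "(of_int ?x::rat) > 0" by (simp only: of_int_0_less_iff)
    then show "(of_int ?x :: rat) / of_int (r*(r-1)) > 0" using divide_pos_pos pos by blast
  next
    assume a: "(of_int ?x :: rat) / of_int (r*(r-1)) > 0"
    show "?x > 0"
    proof (rule ccontr)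
      assume "\<not> ?x > 0" then have "(of_int ?x :: rat) \<le> 0" by (simp only: of_int_le_0_iff not_less)
      then have "(of_int ?x :: rat) / of_int (r*(r-1)) \<le> 0" using pos divide_nonpos_pos by blast
      then show False using a by linarith
    qed
  qed
  then show ?thesis unfolding gval_eq[OF assms] .
qed

lemma Uset_iff:
  "(r,e,d) \<in> Uset p \<longleftrightarrow> (r \<ge> 2 \<and> e \<ge> 1 \<and> 1 \<le> d \<and> d \<le> p \<and> d*(p-1) \<le> r*e \<and> r*e \<le> r*(p-1)
     \<and> 2*r*e*d - d*(d+1)*(p-1) > 0
     \<and> (\<exists>k. 2*r*e*d - d*(d+1)*(p-1) = k * (r*(r-1)) \<and> (p \<noteq> 2 \<longrightarrow> even k)))"
proof (cases "r \<ge> 2")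
  case True
  have A: "(\<exists>k::int. gval p r e d = of_int (2*k)) \<longleftrightarrow> (\<exists>k. 2*r*e*d - d*(d+1)*(p-1) = k * (r*(r-1)) \<and> even k)"
    unfolding gval_int_iff[OF True] by (auto elim!: evenE)
  have B: "(\<exists>k::int. gval p r e d = of_int k) \<longleftrightarrow> (\<exists>k. 2*r*e*d - d*(d+1)*(p-1) = k * (r*(r-1)))"
    unfolding gval_int_iff[OF True] by auto
  show ?thesis unfolding Uset_def using A B gval_pos_iff[OF True] by (cases "p = 2") auto
qed (simp add: Uset_def)

lemma half_less_iff: "((of_int (p-1) :: rat) / 2 < of_int e) \<longleftrightarrow> p - 1 < 2*e"
proof -
  have "((of_int (p-1) :: rat) / 2 < of_int e) \<longleftrightarrow> (of_int (p-1) :: rat) < of_int (2*e)" by (simp add: mult.commute)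
  also have "\<dots> \<longleftrightarrow> p - 1 < 2*e" by (rule of_int_less_iff)
  finally show ?thesis .
qed

lemma Bset_iff:
  "(r,e,d) \<in> Bset p \<longleftrightarrow>
    (2 \<le> r \<and> r \<le> p \<and> e = p - 1 \<and> d = r)
  \<or> (2 \<le> r \<and> r \<le> p + 1 \<and> p - 1 < 2*e \<and> e \<le> p - 1 \<and> r*(p-1-e) \<le> p - 1 \<and> d = r - 1)
  \<or> (2 \<le> r \<and> p - 1 < 2*e \<and> e \<le> p - 1 \<and> r*(p-1-e) = p - 1 \<and> d = r - 2)"
  unfolding Bset_def Bplus_def Bzero_def Bminus_def half_less_iff by auto

lemma cpowA_zero:
  assumes r: "r \<ge> 1" and e: "e \<ge> 0" and nc: "\<not> (0 \<le> k \<and> r dvd k \<and> k div r \<le> e)"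
  shows "cpow (hA (nat r) :: 'a::comm_ring_1 poly) (nat e) k = 0"
proof (cases "k < 0")
  case False
  obtain R E n where RE: "r = int R" "e = int E" "k = int n" using r e False
    by (metis nonneg_int_cases not_less order_trans zero_le_one)
  have "R \<ge> 1" using r RE by simp
  then show ?thesis using nc RE unfolding cpow_def
    by (auto simp: coeff_hA_pow zdiv_int)
qed (simp add: cpow_def)

lemma cpowA_nz:
  assumes r: "r \<ge> 1" and e: "e \<ge> 0" "e < int CARD('p::prime_card)"
    and k: "0 \<le> k" "r dvd k" "k div r \<le> e"
  shows "(cpow (hA (nat r)) (nat e) k :: 'p mod_ring) \<noteq> 0"
proof -
  obtain R E n where RE: "r = int R" "e = int E" "k = int n" using r e k
    by (metis nonneg_int_cases order_trans zero_le_one)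
  have R: "R \<ge> 1" using r RE by simp
  have d: "R dvd n" "n div R \<le> E" using k RE by (auto simp flip: zdiv_int)
  have "E < CARD('p)" using e RE by simp
  then have "(of_nat (E choose (n div R)) :: 'p mod_ring) \<noteq> 0" using d by (intro binom_nz) auto
  then show ?thesis using R d RE unfolding cpow_def by (simp add: coeff_hA_pow)
qed

lemma cpowB_zero:
  assumes r: "e < r" and e: "e \<ge> 0" and nc: "\<not> (0 \<le> k \<and> k div r \<le> e \<and> k mod r + k div r \<le> e)"
  shows "cpow (hB (nat r) :: 'a::comm_ring_1 poly) (nat e) k = 0"
proof (cases "k < 0")
  case False
  obtain R E n where RE: "r = int R" "e = int E" "k = int n" using r e False
    by (metis nonneg_int_cases not_less order_trans less_imp_le)
  have "E < R" using r RE by simp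
  then show ?thesis using nc RE unfolding cpow_def
    by (auto simp: coeff_hB_pow binomial_eq_0 simp flip: zdiv_int zmod_int)
qed (simp add: cpow_def)

lemma cpowB_nz:
  assumes r: "e < r" and e: "e \<ge> 0" "e < int CARD('p::prime_card)"
    and k: "0 \<le> k" "k div r \<le> e" "k mod r + k div r \<le> e"
  shows "(cpow (hB (nat r)) (nat e) k :: 'p mod_ring) \<noteq> 0"
proof -
  obtain R E n where RE: "r = int R" "e = int E" "k = int n" using r e k
    by (metis nonneg_int_cases order_trans less_imp_le)
  have R: "E < R" using r RE by simp
  have d: "n div R \<le> E" "n mod R \<le> E - n div R" using k RE by (auto simp flip: zdiv_int zmod_int)
  have "E < CARD('p)" using e RE by simp
  then have "(of_nat (E choose (n div R)) :: 'p mod_ring) \<noteq> 0"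
     "(of_nat ((E - n div R) choose (n mod R)) :: 'p mod_ring) \<noteq> 0" using d
    by (intro binom_nz; simp)+
  then show ?thesis using R d RE unfolding cpow_def by (simp add: coeff_hB_pow)
qed



lemma UsetE:
  assumes "(r,e,d) \<in> Uset p"
  obtains k where "r \<ge> 2" "e \<ge> 1" "1 \<le> d" "d \<le> p" "d*(p-1) \<le> r*e" "r*e \<le> r*(p-1)"
     "2*r*e*d - d*(d+1)*(p-1) > 0" "2*r*e*d - d*(d+1)*(p-1) = k * (r*(r-1))" "p \<noteq> 2 \<longrightarrow> even k"
  using assms[unfolded Uset_iff]
  apply (elim conjE exE)
  apply (rule that)
  apply assumption+
  done

lemma UsetI:
  assumes "r \<ge> 2" "e \<ge> 1" "1 \<le> d" "d \<le> p" "d*(p-1) \<le> r*e" "r*e \<le> r*(p-1)"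
     "2*r*e*d - d*(d+1)*(p-1) > 0" "2*r*e*d - d*(d+1)*(p-1) = k * (r*(r-1))" "p \<noteq> 2 \<longrightarrow> even k"
  shows "(r,e,d) \<in> Uset p"
  unfolding Uset_iff
  apply (intro conjI exI[of _ k])
  apply (rule assms)+
  done

lemma BsetE:
  assumes "(r,e,d) \<in> Bset p"
  obtains (plus) "2 \<le> r" "r \<le> p" "e = p - 1" "d = r"
  | (zero) "2 \<le> r" "r \<le> p + 1" "p - 1 < 2*e" "e \<le> p - 1" "r*(p-1-e) \<le> p - 1" "d = r - 1"
  | (minus) "2 \<le> r" "p - 1 < 2*e" "e \<le> p - 1" "r*(p-1-e) = p - 1" "d = r - 2"
  using assms[unfolded Bset_iff]
  apply (elim disjE conjE)
  subgoal by (rule plus; assumption)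
  subgoal by (rule zero; assumption)
  subgoal by (rule minus; assumption)
  done

lemma mult_eq_one:
  fixes p x m :: int
  assumes "p \<ge> 2" "x = p*m" "x > 0" "x < 2*p"
  shows "m = 1"
proof -
  have "p*m > 0" using assms by simp
  then have "m > 0" using assms(1) by (simp add: zero_less_mult_iff)
  moreover have "p*m < p*2" using assms by (simp add: mult.commute)
  then have "m < 2" using assms(1) by simp
  ultimately show ?thesis by simp
qed

lemma row_nz:
  assumes "det (Mmat h E p D) \<noteq> 0" "i < D"
  shows "\<exists>j<D. cpow h E ((int i + 1) * p + (int j + 1) - int D - 1) \<noteq> 0"
proof (rule ccontr)
  assume "\<not> ?thesis"
  then have "\<And>j. j < D \<Longrightarrow> Mmat h E p D $$ (i,j) = 0" using assms(2) by (simp add: Mmat_entry)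
  then have "det (Mmat h E p D) = 0" by (rule det_zero_row[OF Mmat_carrier assms(2)])
  then show False using assms(1) by simp
qed

lemma prime_p_facts: "prime (int CARD('p::prime_card))" "int CARD('p) \<ge> 2"
  using prime_card_int[where 'a='p] prime_ge_2_nat[OF prime_card[where 'a='p]] by auto

lemma part1_fwd:
  fixes r e d :: int
  defines "p \<equiv> int CARD('p::prime_card)"
  assumes U: "(r,e,d) \<in> Uset p" and dvd: "p dvd r"
    and det: "det (Mmat (hB (nat r) :: 'p mod_ring poly) (nat e) p (nat d)) \<noteq> 0"
  shows "r = p \<and> e = p - 1 \<and> (d = p \<or> d = p - 1)"
proof -
  have pr: "prime p" and p2: "p \<ge> 2" using prime_p_facts[where 'p='p] p_def by auto
  obtain k where r2: "r \<ge> 2" and e1: "e \<ge> 1" and d1: "1 \<le> d" "d \<le> p"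
    and l1: "d*(p-1) \<le> r*e" and l2: "r*e \<le> r*(p-1)" and Npos: "2*r*e*d - d*(d+1)*(p-1) > 0"
    and Nk: "2*r*e*d - d*(d+1)*(p-1) = k*(r*(r-1))" and "p \<noteq> 2 \<longrightarrow> even k" by (rule UsetE[OF U])
  have ep: "e \<le> p - 1" using l2 r2 by simp
  have rp: "p \<le> r" using zdvd_imp_le dvd r2 by simp
  have er: "e < r" using ep rp by simp
  have dD: "int (nat d) = d" using d1 by simp
  have row: "\<exists>j<nat d. cpow (hB (nat r)) (nat e) ((int i + 1)*p + (int j+1) - d - 1) \<noteq> (0::'p mod_ring)"
    if "i < nat d" for i
    using row_nz[OF det that] dD by simp
  have nzc: "0 \<le> x \<and> x div r \<le> e \<and> x mod r + x div r \<le> e"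
    if "cpow (hB (nat r)) (nat e) x \<noteq> (0::'p mod_ring)" for x
    using cpowB_zero[OF er, of x] e1 that by auto
  show ?thesis
  proof (cases "r < 2*p")
    case True
    from dvd obtain m where m: "r = p*m" by (auto elim: dvdE)
    have "m = 1" using mult_eq_one[OF p2 m] r2 True by simp
    then have rpe: "r = p" using m by simp
    obtain j where j: "j < nat d" and nz: "cpow (hB (nat r)) (nat e) ((int (nat d - 1) + 1)*p + (int j+1) - d - 1) \<noteq> (0::'p mod_ring)"
      using row[of "nat d - 1"] d1 by auto
    define x where "x = (int (nat d - 1) + 1)*p + (int j+1) - d - 1"
    have x: "x = p * (d - 1) + (p - d + int j)" unfolding x_def using d1 by (simp add: algebra_simps)
    have xd: "x div p = d - 1" "x mod p = p - d + int j" using x j d1 p2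
      by (intro int_div_pos_eq int_mod_pos_eq; simp; linarith)+
    have "x mod r + x div r \<le> e" using nzc nz x_def by auto
    then have e: "e = p - 1" using xd rpe ep by simp
    have "(p-1)*(d*(2*p-d-1)) = 2*r*e*d - d*(d+1)*(p-1)" unfolding rpe e by (simp add: algebra_simps)
    also have "\<dots> = k*(r*(r-1))" by (rule Nk)
    also have "\<dots> = (p-1)*(k*p)" unfolding rpe by (simp add: algebra_simps)
    finally have eq: "d*(2*p-d-1) = k*p" using p2 by simp
    then have "p dvd d*(2*p-d-1)" by simp
    then have "p dvd d \<or> p dvd (2*p-d-1)" using pr prime_dvd_mult_iff by blast
    then have "d = p \<or> d = p - 1"
    proof
      assume "p dvd d" then show ?thesis using zdvd_imp_le[of p d] d1 by auto
    next
      assume a: "p dvd (2*p-d-1)"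
      have "p dvd 2*p" by simp
      then have "p dvd (2*p - (2*p-d-1))" using a by (rule dvd_diff)
      then have "p dvd (d+1)" by simp
      then obtain m' where m': "d + 1 = p * m'" by (auto elim: dvdE)
      have "m' = 1" using mult_eq_one[OF p2 m'] d1 p2 by simp
      then show ?thesis using m' by simp
    qed
    then show ?thesis using rpe e by simp
  next
    case False
    show ?thesis
    proof (cases "d = 1")
      case True
      obtain j where j: "j < nat d" and nz: "cpow (hB (nat r)) (nat e) ((int 0 + 1)*p + (int j+1) - d - 1) \<noteq> (0::'p mod_ring)"
        using row[of 0] d1 by auto
      have j0: "j = 0" using j True by simp
      have xd: "(p-1) div r = 0" "(p-1) mod r = p - 1" using False p2 by simp_all
      have "(p - 1) mod r + (p-1) div r \<le> e" using nzc[OF nz] j0 True by simp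
      then have e: "e = p - 1" using xd ep by simp
      have "(r-1)*(2*(p-1)) = 2*r*e*d - d*(d+1)*(p-1)" unfolding True e by (simp add: algebra_simps)
      also have "\<dots> = k*(r*(r-1))" by (rule Nk)
      also have "\<dots> = (r-1)*(k*r)" by (simp add: algebra_simps)
      finally have eq: "2*(p-1) = k*r" using r2 by simp
      have "k*r > 0" using eq p2 by simp
      then have "k > 0" using r2 by (simp add: zero_less_mult_iff)
      then have "k*r \<ge> r" using r2 by simp
      then show ?thesis using eq False by simp
    next
      case d2: False
      obtain j where j: "j < nat d" and nz: "cpow (hB (nat r)) (nat e) ((int 1 + 1)*p + (int j+1) - d - 1) \<noteq> (0::'p mod_ring)"
        using row[of 1] d1 d2 by auto
      define x where "x = (int 1 + 1)*p + (int j+1) - d - 1"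
      have x0: "0 \<le> x" "x < r" using x_def j d1 False by auto
      then have "x div r = 0" "x mod r = x" by simp_all
      moreover have "x mod r + x div r \<le> e" using nzc nz x_def by auto
      ultimately show ?thesis using x_def d1 ep by simp
    qed
  qed
qed

lemma det_antidiag:
  fixes A :: "'a::idom mat"
  assumes A: "A \<in> carrier_mat n n"
    and nz: "\<And>i j. i < n \<Longrightarrow> j < n \<Longrightarrow> A $$ (i,j) \<noteq> 0 \<longleftrightarrow> i + j \<le> n - 1"
  shows "det A \<noteq> 0"
proof -
  define s where "s = (\<lambda>i. if i < n then n - 1 - i else i)"
  have sp: "s permutes {0..<n}"
  proof (rule permutes_of_inj)
    show "inj_on s {0..<n}" unfolding s_def by (auto intro!: inj_onI)
  qed (auto simp: s_def)
  show ?thesis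
  proof (rule det_unique_perm[OF A sp])
    fix i assume "i < n" then show "A $$ (i, s i) \<noteq> 0" using nz by (simp add: s_def)
  next
    fix q assume q: "q permutes {0..<n}" and qa: "\<And>i. i < n \<Longrightarrow> A $$ (i, q i) \<noteq> 0"
    have qi: "i < n \<Longrightarrow> q i < n" for i using permutes_in_image[OF q] by simp
    have "i < n \<Longrightarrow> i + q i \<le> n - 1" for i using nz qa qi by blast
    then have "\<And>i. i < n \<Longrightarrow> q i = n - 1 - i" using antidiag_unique[OF q] by blast
    moreover have "\<And>i. \<not> i < n \<Longrightarrow> q i = i" using permutes_not_in[OF q] by simp
    ultimately show "q = s" unfolding s_def by (intro ext) auto
  qed
qed

lemma det_monomial:
  fixes A :: "'a::idom mat"
  assumes A: "A \<in> carrier_mat n n"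
    and sl: "\<And>i. i < n \<Longrightarrow> s i < n" and si: "inj_on s {0..<n}"
    and nz: "\<And>i j. i < n \<Longrightarrow> j < n \<Longrightarrow> A $$ (i,j) \<noteq> 0 \<longleftrightarrow> j = s i"
  shows "det A \<noteq> 0"
proof -
  define s' where "s' = (\<lambda>i. if i < n then s i else i)"
  have sp: "s' permutes {0..<n}"
  proof (rule permutes_of_inj)
    show "inj_on s' {0..<n}" using si unfolding s'_def inj_on_def by auto
  qed (auto simp: s'_def sl)
  show ?thesis
  proof (rule det_unique_perm[OF A sp])
    fix i assume "i < n" then show "A $$ (i, s' i) \<noteq> 0" using nz sl by (simp add: s'_def)
  next
    fix q assume q: "q permutes {0..<n}" and qa: "\<And>i. i < n \<Longrightarrow> A $$ (i, q i) \<noteq> 0"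
    have qi: "i < n \<Longrightarrow> q i < n" for i using permutes_in_image[OF q] by simp
    have "\<And>i. i < n \<Longrightarrow> q i = s i" using nz qa qi by blast
    moreover have "\<And>i. \<not> i < n \<Longrightarrow> q i = i" using permutes_not_in[OF q] by simp
    ultimately show "q = s'" unfolding s'_def by (intro ext) auto
  qed
qed

lemma p_odd: "int CARD('p::prime_card) \<noteq> 2 \<Longrightarrow> odd (int CARD('p))"
  using prime_odd_nat[OF prime_card[where 'a='p]] prime_ge_2_nat[OF prime_card[where 'a='p]]
  by simp

lemma part1_bwd:
  fixes r e d :: int
  defines "p \<equiv> int CARD('p::prime_card)"
  assumes B: "(r,e,d) \<in> Bset p" and dvd: "p dvd r"
  shows "(r,e,d) \<in> Uset p \<and> det (Mmat (hB (nat r) :: 'p mod_ring poly) (nat e) p (nat d)) \<noteq> 0"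
proof -
  have pr: "prime p" and p2: "p \<ge> 2" using prime_p_facts[where 'p='p] p_def by auto
  have rpe: "r = p \<and> e = p - 1 \<and> (d = p \<or> d = p - 1)"
    using B
  proof (cases rule: BsetE)
    case plus
    then show ?thesis using zdvd_imp_le[OF dvd] by simp
  next
    case zero
    note a = zero
    from dvd obtain m where m: "r = p*m" by (auto elim: dvdE)
    have "m = 1" using mult_eq_one[OF p2 m] a p2 by simp
    then have rp: "r = p" using m by simp
    have "p - 1 - e = 0"
    proof (rule ccontr)
      assume "p - 1 - e \<noteq> 0" then have "p - 1 - e \<ge> 1" using a by simp
      then have "r * (p-1-e) \<ge> r" using a by simp
      then show False using a rp by simp
    qed
    then show ?thesis using a rp by simp
  next
    case minus
    note a = minus
    have "p dvd r * (p - 1 - e)" using dvd by (rule dvd_mult2)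
    then have a2: "p dvd p - 1" using a by simp
    have "p dvd p" by simp
    then have "p dvd p - (p - 1)" using a2 by (rule dvd_diff)
    then have "p dvd 1" by simp
    then show ?thesis using p2 by simp
  qed
  then have rp: "r = p" and ep: "e = p - 1" and dp: "d = p \<or> d = p - 1" by auto
  have N: "2*r*e*d - d*(d+1)*(p-1) = (p-1) * (r*(r-1))"
  proof (cases "d = p")
    case True then show ?thesis unfolding rp ep True by (simp add: algebra_simps)
  next
    case False then have dd: "d = p - 1" using dp by simp
    show ?thesis unfolding rp ep dd by (simp add: algebra_simps)
  qed
  have pos: "(p-1) * (r*(r-1)) > 0" using rp p2 by simp
  have par: "p \<noteq> 2 \<longrightarrow> even (p - 1)" using p_odd[where 'p='p] p_def by auto
  have U: "(r,e,d) \<in> Uset p"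
  proof (rule UsetI[OF _ _ _ _ _ _ _ N par])
    show "0 < 2 * r * e * d - d * (d + 1) * (p - 1)" using N pos by simp
    have "d \<le> r" using rp dp by auto
    then have "d * (p - 1) \<le> r * (p - 1)" using p2 by (intro mult_right_mono) auto
    then show "d * (p - 1) \<le> r * e" using ep by simp
  qed (use rp ep dp p2 in auto)
  have er: "e < r" "e \<ge> 0" "e < int CARD('p)" using rp ep p2 p_def by auto
  have dD: "int (nat d) = d" using dp p2 by auto
  have "det (Mmat (hB (nat r) :: 'p mod_ring poly) (nat e) p (nat d)) \<noteq> 0"
  proof (rule det_antidiag[OF Mmat_carrier])
    fix i j assume ij: "i < nat d" "j < nat d"
    define x where "x = (int i + 1) * p + (int j + 1) - int (nat d) - 1"
    have x: "x = p * int i + (int j + p - d)" unfolding x_def dD by (simp add: algebra_simps)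
    have xd: "x div p = int i" "x mod p = int j + p - d" using x ij dp p2 dD
      by (intro int_div_pos_eq int_mod_pos_eq; simp; linarith)+
    have "0 \<le> p * int i" using p2 by simp
    then have x0: "0 \<le> x" using x ij dp p2 by linarith
    have "Mmat (hB (nat r) :: 'p mod_ring poly) (nat e) p (nat d) $$ (i,j) = cpow (hB (nat r)) (nat e) x"
      using ij unfolding x_def by (simp add: Mmat_entry)
    also have "\<dots> \<noteq> 0 \<longleftrightarrow> (0 \<le> x \<and> x div r \<le> e \<and> x mod r + x div r \<le> e)"
      using cpowB_zero[OF er(1,2), of x] cpowB_nz[OF er, of x] by blast
    also have "\<dots> \<longleftrightarrow> i + j \<le> nat d - 1" using xd x0 rp ep ij dp dD by auto
    finally show "Mmat (hB (nat r) :: 'p mod_ring poly) (nat e) p (nat d) $$ (i,j) \<noteq> 0 \<longleftrightarrow> i + j \<le> nat d - 1" .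
  qed
  with U show ?thesis by simp
qed



lemma cop_dvd: fixes r p i :: int assumes "coprime r p" "r dvd i * p" shows "r dvd i"
  using assms coprime_dvd_mult_left_iff by blast

lemma detA_nz:
  fixes r e d :: int
  defines "p \<equiv> int CARD('p::prime_card)"
  assumes r2: "r \<ge> 2" and cop: "coprime r p" and dd: "d = r \<or> d = r - 1" and d1: "d \<ge> 1"
    and dp: "d \<le> p" and e0: "0 \<le> e" and ep: "e < p" and bound: "d*p \<le> r*(e+1)"
  shows "det (Mmat (hA (nat r) :: 'p mod_ring poly) (nat e) p (nat d)) \<noteq> 0"
proof -
  have dD: "int (nat d) = d" using d1 by simp
  define s where "s = (\<lambda>i::nat. nat ((d - (int i + 1)*p) mod r))"
  have p2: "p \<ge> 2" using prime_p_facts[where 'p='p] p_def by auto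
  have er: "e < int CARD('p)" using ep p_def by simp
  have sl: "s i < nat d" if i: "i < nat d" for i
  proof (cases "d = r")
    case True then show ?thesis unfolding s_def using r2 by simp
  next
    case False
    then have dr: "d = r - 1" using dd by simp
    have "(d - (int i + 1)*p) mod r \<noteq> d"
    proof
      assume h: "(d - (int i + 1)*p) mod r = d"
      have "d mod r = d" using dr r2 d1 by (intro mod_pos_pos_trivial) auto
      then have "(d - (int i + 1)*p) mod r = d mod r" using h by simp
      then have "r dvd (d - (int i + 1)*p) - d" by (simp only: mod_eq_dvd_iff)
      then have "r dvd (int i + 1) * p" by (simp add: dvd_neg_div)
      then have "r dvd int i + 1" by (rule cop_dvd[OF cop])
      then have "r \<le> int i + 1" by (rule zdvd_imp_le) simp
      then show False using i dr d1 by simp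
    qed
    moreover have "(d - (int i + 1)*p) mod r < r" "(d - (int i + 1)*p) mod r \<ge> 0" using r2 by simp_all
    ultimately show ?thesis unfolding s_def using dr by simp
  qed
  have si: "inj_on s {0..<nat d}"
  proof (rule inj_onI)
    fix i i' assume i: "i \<in> {0..<nat d}" and i': "i' \<in> {0..<nat d}" and eq: "s i = s i'"
    have "(d - (int i + 1)*p) mod r = (d - (int i' + 1)*p) mod r"
      using eq unfolding s_def using r2 by (simp add: nat_eq_iff2)
    then have "r dvd (d - (int i + 1)*p) - (d - (int i' + 1)*p)" by (simp only: mod_eq_dvd_iff)
    moreover have "(d - (int i + 1)*p) - (d - (int i' + 1)*p) = (int i' - int i) * p" by (simp add: algebra_simps)
    ultimately have "r dvd (int i' - int i) * p" by simp
    then have h: "r dvd int i' - int i" by (rule cop_dvd[OF cop])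
    show "i = i'"
    proof (rule ccontr)
      assume "i \<noteq> i'"
      then have "int i' - int i \<noteq> 0" by simp
      then have pos: "\<bar>int i' - int i\<bar> > 0" by simp
      have "r dvd \<bar>int i' - int i\<bar>" using h by simp
      then have "r \<le> \<bar>int i' - int i\<bar>" using pos by (rule zdvd_imp_le)
      then show False using i i' dd d1 by auto
    qed
  qed
  show ?thesis
  proof (rule det_monomial[OF Mmat_carrier sl si])
    fix i j assume ij: "i < nat d" "j < nat d"
    define x where "x = (int i + 1) * p + (int j + 1) - int (nat d) - 1"
    have x: "x = (int i + 1) * p + int j - d" unfolding x_def dD by simp
    have x0: "0 \<le> x" using x ij dp p2 by (simp add: algebra_simps) (smt (verit) mult_le_cancel_right1 of_nat_0_le_iff)
    have xl: "x < r * (e+1)"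
    proof -
      have "(int i + 1) * p \<le> d * p" using ij p2 by (intro mult_right_mono) auto
      then show ?thesis using x ij bound by linarith
    qed
    have entry: "Mmat (hA (nat r) :: 'p mod_ring poly) (nat e) p (nat d) $$ (i,j) = cpow (hA (nat r)) (nat e) x"
      using ij unfolding x_def by (simp add: Mmat_entry)
    have "cpow (hA (nat r)) (nat e) x \<noteq> (0 :: 'p mod_ring) \<longleftrightarrow> r dvd x"
    proof
      assume "cpow (hA (nat r)) (nat e) x \<noteq> (0 :: 'p mod_ring)"
      then show "r dvd x" using cpowA_zero[of r e x] r2 e0 by auto
    next
      assume rx: "r dvd x"
      then obtain q where q: "x = r * q" by (auto elim: dvdE)
      have "q < e + 1" using q xl r2 by (simp add: mult_less_cancel_left_pos)
      moreover have "x div r = q" using q r2 by simp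
      ultimately show "cpow (hA (nat r)) (nat e) x \<noteq> (0 :: 'p mod_ring)"
        using cpowA_nz[of r e x, OF _ e0 er x0 rx] r2 by simp
    qed
    also have "r dvd x \<longleftrightarrow> int j mod r = (d - (int i + 1)*p) mod r"
      by (simp only: mod_eq_dvd_iff x) (simp add: algebra_simps)
    also have "int j mod r = int j" using ij dd d1 by (intro mod_pos_pos_trivial) auto
    also have "int j = (d - (int i + 1)*p) mod r \<longleftrightarrow> j = s i" unfolding s_def using r2 by auto
    finally show "Mmat (hA (nat r) :: 'p mod_ring poly) (nat e) p (nat d) $$ (i,j) \<noteq> 0 \<longleftrightarrow> j = s i"
      using entry by simp
  qed
qed


lemma comb:
  fixes r p d :: int
  assumes r2: "r \<ge> 2" and cop: "coprime r p" and q1: "p mod r \<noteq> 1" and d1: "1 \<le> d" and dr: "d \<le> r - 2"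
  shows "\<exists>i. 1 \<le> i \<and> i \<le> d \<and> \<not> (1 \<le> (i*p) mod r \<and> (i*p) mod r \<le> d)"
proof (rule ccontr)
  assume "\<not> ?thesis"
  then have H: "\<And>i. 1 \<le> i \<Longrightarrow> i \<le> d \<Longrightarrow> 1 \<le> (i*p) mod r \<and> (i*p) mod r \<le> d" by blast
  define q where "q = p mod r"
  have q: "1 \<le> q" "q \<le> d" using H[of 1] d1 q_def by auto
  have q2: "q \<ge> 2" using q q1 q_def by auto
  have qr: "q < r" using r2 q_def by simp
  define m where "m = d div q"
  have dm: "d = m * q + d mod q" unfolding m_def by simp
  have dmq: "0 \<le> d mod q" "d mod q < q" using q2 by simp_all
  have m1: "m \<ge> 1"
  proof (rule ccontr)
    assume "\<not> m \<ge> 1"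
    then have "m \<le> 0" by simp
    then have "m * q \<le> 0" using q2 by (simp add: mult_nonpos_nonneg)
    then show False using dm dmq q by linarith
  qed
  have mq: "m*q \<le> d" "d < (m+1)*q" using dm dmq by (simp_all add: algebra_simps)
  have "2*m \<le> m*q" using m1 q2 by (simp add: mult.commute mult_left_mono)
  then have m2: "m + 1 \<le> d" using mq m1 by linarith
  have f: "((m+1)*p) mod r = ((m+1)*q) mod r" by (simp add: q_def mod_mult_right_eq)
  have big: "(m+1)*q \<ge> r"
  proof (rule ccontr)
    assume "\<not> (m+1)*q \<ge> r"
    then have "((m+1)*q) mod r = (m+1)*q" using m1 q2 by (intro mod_pos_pos_trivial) auto
    then have "((m+1)*p) mod r > d" using f mq by simp
    then show False using H[of "m+1"] m1 m2 by simp
  qed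
  have rq: "r - q \<le> d" using big mq by (simp add: algebra_simps)
  define F where "F = (\<lambda>i. (i*p) mod r)"
  have inj: "inj_on F {1..d}"
  proof (rule inj_onI)
    fix i i' assume i: "i \<in> {1..d}" and i': "i' \<in> {1..d}" and eq: "F i = F i'"
    then have "r dvd i*p - i'*p" unfolding F_def by (simp only: mod_eq_dvd_iff)
    then have "r dvd (i - i')*p" by (simp add: algebra_simps)
    then have h: "r dvd i - i'" by (rule cop_dvd[OF cop])
    show "i = i'"
    proof (rule ccontr)
      assume "i \<noteq> i'"
      then have pos: "\<bar>i - i'\<bar> > 0" by simp
      have "r dvd \<bar>i - i'\<bar>" using h by simp
      then have "r \<le> \<bar>i - i'\<bar>" using pos by (rule zdvd_imp_le)
      then show False using i i' dr by auto
    qed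
  qed
  have "F ` {1..d} \<subseteq> {1..d}" using H unfolding F_def by auto
  then have surj: "F ` {1..d} = {1..d}" using inj by (intro endo_inj_surj) auto
  have "r - q \<in> {1..d}" using rq qr by simp
  then obtain i where i: "i \<in> {1..d}" and Fi: "F i = r - q" using surj by (metis imageE)
  have "((i+1)*p) mod r = ((i*p) mod r + p mod r) mod r" by (simp add: algebra_simps mod_add_eq)
  also have "\<dots> = 0" using Fi unfolding F_def q_def by simp
  finally have "r dvd (i+1)*p" by (simp add: mod_eq_0_iff_dvd)
  then have "r dvd i+1" by (rule cop_dvd[OF cop])
  then have "r \<le> i+1" using i by (intro zdvd_imp_le) auto
  then show False using i dr by simp
qed

lemma part3_zero_row:
  fixes r e d :: int
  defines "p \<equiv> int CARD('p::prime_card)"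
  assumes r2: "r \<ge> 2" and cop: "coprime r p" and q1: "p mod r \<noteq> 1" and d1: "1 \<le> d" and dr: "d \<le> r - 2"
    and dp: "d \<le> p" and e0: "e \<ge> 0"
  shows "det (Mmat (hA (nat r) :: 'p mod_ring poly) (nat e) p (nat d)) = 0"
proof -
  obtain i where i: "1 \<le> i" "i \<le> d" and ni: "\<not> (1 \<le> (i*p) mod r \<and> (i*p) mod r \<le> d)"
    using comb[OF r2 cop q1 d1 dr] by blast
  have dD: "int (nat d) = d" using d1 by simp
  have iD: "nat (i - 1) < nat d" using i by simp
  show ?thesis
  proof (rule det_zero_row[OF Mmat_carrier iD])
    fix j assume j: "j < nat d"
    define x where "x = (int (nat (i-1)) + 1) * p + (int j + 1) - int (nat d) - 1"
    have x: "x = i*p - (d - int j)" unfolding x_def dD using i by (simp add: algebra_simps)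
    have "cpow (hA (nat r)) (nat e) x = (0 :: 'p mod_ring)"
    proof (rule ccontr)
      assume "cpow (hA (nat r)) (nat e) x \<noteq> (0 :: 'p mod_ring)"
      then have "r dvd x" using cpowA_zero[of r e x] r2 e0 by auto
      then have "(i*p) mod r = (d - int j) mod r" unfolding x by (simp only: mod_eq_dvd_iff)
      also have "\<dots> = d - int j" using j dr d1 by (intro mod_pos_pos_trivial) auto
      finally show False using ni j by simp
    qed
    then show "Mmat (hA (nat r) :: 'p mod_ring poly) (nat e) p (nat d) $$ (nat (i - 1), j) = 0"
      using iD j unfolding x_def by (simp add: Mmat_entry)
  qed
qed



lemma part2_fwd:
  fixes r e d :: int
  defines "p \<equiv> int CARD('p::prime_card)"
  assumes U: "(r,e,d) \<in> Uset p" and pr: "p < r"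
    and det: "det (Mmat (hA (nat r) :: 'p mod_ring poly) (nat e) p (nat d)) \<noteq> 0"
  shows "r = p + 1 \<and> e = p - 1 \<and> d = p"
proof -
  have p2: "p \<ge> 2" using prime_p_facts[where 'p='p] p_def by auto
  obtain k where r2: "r \<ge> 2" and e1: "e \<ge> 1" and d1: "1 \<le> d" "d \<le> p"
    and l1: "d*(p-1) \<le> r*e" and l2: "r*e \<le> r*(p-1)" and Npos: "2*r*e*d - d*(d+1)*(p-1) > 0"
    and Nk: "2*r*e*d - d*(d+1)*(p-1) = k*(r*(r-1))" and "p \<noteq> 2 \<longrightarrow> even k" by (rule UsetE[OF U])
  have ep: "e \<le> p - 1" using l2 r2 by simp
  have dD: "int (nat d) = d" using d1 by simp
  have row: "\<exists>j<nat d. cpow (hA (nat r)) (nat e) ((int i + 1)*p + (int j+1) - d - 1) \<noteq> (0::'p mod_ring)"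
    if "i < nat d" for i
    using row_nz[OF det that] dD by simp
  have nzc: "0 \<le> x \<and> r dvd x \<and> x div r \<le> e"
    if "cpow (hA (nat r)) (nat e) x \<noteq> (0::'p mod_ring)" for x
    using cpowA_zero[of r e x] r2 e1 that by auto
  have dp: "d = p"
  proof -
    obtain j where j: "j < nat d" and nz: "cpow (hA (nat r)) (nat e) ((int 0 + 1)*p + (int j+1) - d - 1) \<noteq> (0::'p mod_ring)"
      using row[of 0] d1 by auto
    define x where "x = (int 0 + 1)*p + (int j+1) - d - 1"
    have x: "x = p + int j - d" unfolding x_def by simp
    have h: "0 \<le> x" "r dvd x" using nzc nz x_def by auto
    have "x \<le> p - 1" using x j d1 by simp
    then have "x = 0"
    proof (cases "x = 0")
      case False
      then have "r \<le> x" using h by (intro zdvd_imp_le) auto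
      then show ?thesis using \<open>x \<le> p - 1\<close> pr by simp
    qed
    then show ?thesis using x d1 by simp
  qed
  have blk: "int n \<le> q" if "n < nat p" "int n*p \<le> r*q" "r*q \<le> int n*p + p - 1" for n q
    using that
  proof (induction n arbitrary: q)
    case 0
    then have "r*q \<ge> 0" by simp
    then show ?case using r2 by (simp add: zero_le_mult_iff)
  next
    case (Suc n)
    have n: "n < nat d" using Suc.prems dp by simp
    obtain j where j: "j < nat d" and nz: "cpow (hA (nat r)) (nat e) ((int n + 1)*p + (int j+1) - d - 1) \<noteq> (0::'p mod_ring)"
      using row[OF n] by auto
    define x where "x = (int n + 1)*p + (int j+1) - d - 1"
    have x: "x = int n * p + int j" unfolding x_def dp by (simp add: algebra_simps)
    have h: "0 \<le> x" "r dvd x" using nzc nz x_def by auto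
    then obtain q' where q': "x = r*q'" by (auto elim: dvdE)
    have nq: "int n \<le> q'" using Suc.IH[of q'] Suc.prems(1) x q' j dp by simp
    have a1: "int n*p + int j < (int n + 1) * p" using j dp by (simp add: algebra_simps)
    have a2: "(int n + 1) * p \<le> r*q" using Suc.prems(2) by (simp add: add.commute)
    have "r*q' < r*q" using a1 a2 x q' by simp
    then have "q' < q" using r2 by simp
    then show ?case using nq by simp
  qed
  have n: "nat (p - 1) < nat d" using dp p2 by simp
  obtain j where j: "j < nat d" and nz: "cpow (hA (nat r)) (nat e) ((int (nat (p-1)) + 1)*p + (int j+1) - d - 1) \<noteq> (0::'p mod_ring)"
    using row[OF n] by auto
  define x where "x = (int (nat (p-1)) + 1)*p + (int j+1) - d - 1"
  have x: "x = (p - 1) * p + int j" unfolding x_def dp using p2 by (simp add: algebra_simps)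
  have h: "0 \<le> x" "r dvd x" "x div r \<le> e" using nzc nz x_def by auto
  then obtain q where q: "x = r*q" by (auto elim: dvdE)
  have qd: "x div r = q" using q r2 by simp
  have "int (nat (p-1)) \<le> q" using blk[of "nat (p-1)" q] x q j dp p2 by simp
  then have q1: "q = p - 1" and e: "e = p - 1" using h(3) qd ep p2 by auto
  have "(p-1)*r \<le> (p-1)*(p+1)" using x q q1 j dp by (simp add: algebra_simps)
  then have "r \<le> p + 1" using p2 by simp
  then show ?thesis using pr e dp by simp
qed


lemma part2_bwd:
  fixes r e d :: int
  defines "p \<equiv> int CARD('p::prime_card)"
  assumes B: "(r,e,d) \<in> Bset p" and pr: "p < r"
  shows "r = p + 1 \<and> e = p - 1 \<and> d = p \<and> (r,e,d) \<in> Uset p \<and> det (Mmat (hA (nat r) :: 'p mod_ring poly) (nat e) p (nat d)) \<noteq> 0"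
proof -
  have p2: "p \<ge> 2" using prime_p_facts[where 'p='p] p_def by auto
  have rpe: "r = p + 1 \<and> e = p - 1 \<and> d = p"
    using B
  proof (cases rule: BsetE)
    case plus then show ?thesis using pr by simp
  next
    case zero
    have r: "r = p + 1" using zero pr by simp
    have "p - 1 - e = 0"
    proof (rule ccontr)
      assume "p - 1 - e \<noteq> 0" then have "p - 1 - e \<ge> 1" using zero by simp
      then have "r * 1 \<le> r * (p-1-e)" using zero by (intro mult_left_mono) auto
      then have "r * (p-1-e) \<ge> r" by simp
      then show False using zero(5) r by linarith
    qed
    then show ?thesis using zero r by simp
  next
    case minus
    show ?thesis
    proof (cases "p - 1 - e = 0")
      case True then show ?thesis using minus p2 by simp
    next
      case False then have "p - 1 - e \<ge> 1" using minus by simp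
      then have "r * 1 \<le> r * (p-1-e)" using minus by (intro mult_left_mono) auto
      then have "r * (p-1-e) \<ge> r" by simp
      then show ?thesis using minus pr by simp
    qed
  qed
  then have r: "r = p + 1" and e: "e = p - 1" and d: "d = p" by auto
  have N: "2*r*e*d - d*(d+1)*(p-1) = (p-1) * (r*(r-1))" unfolding r e d by (simp add: algebra_simps)
  have pos: "(p-1) * (r*(r-1)) > 0" using r p2 by simp
  have par: "p \<noteq> 2 \<longrightarrow> even (p - 1)" using p_odd[where 'p='p] p_def by auto
  have U: "(r,e,d) \<in> Uset p"
  proof (rule UsetI[OF _ _ _ _ _ _ _ N par])
    show "0 < 2 * r * e * d - d * (d + 1) * (p - 1)" using N pos by simp
    have "p * (p - 1) \<le> (p+1) * (p - 1)" using p2 by (intro mult_right_mono) auto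
    then show "d * (p - 1) \<le> r * e" using r e d by simp
  qed (use r e d p2 in auto)
  have "det (Mmat (hA (nat r) :: 'p mod_ring poly) (nat e) p (nat d)) \<noteq> 0"
    unfolding p_def
  proof (rule detA_nz)
    show "coprime r (int CARD('p))" using r p_def by simp
    show "d * int CARD('p) \<le> r * (e + 1)" using r e d p_def by (simp add: algebra_simps)
  qed (use r e d p2 p_def in auto)
  with U rpe show ?thesis by simp
qed

lemma cop_small:
  fixes r :: int
  defines "p \<equiv> int CARD('p::prime_card)"
  assumes "1 \<le> r" "r < p"
  shows "coprime r p"
proof -
  have "\<not> p dvd r" using assms zdvd_imp_le by fastforce
  then have "coprime p r" using prime_imp_coprime prime_p_facts(1)[where 'p='p] p_def by blast
  then show ?thesis by (simp add: coprime_commute)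
qed

lemma part3_fwd:
  fixes r e d :: int
  defines "p \<equiv> int CARD('p::prime_card)"
  assumes U: "(r,e,d) \<in> Uset p" and r2: "2 \<le> r" and rp: "r \<le> p - 1" and nd: "\<not> r dvd (p - 1)"
    and det: "det (Mmat (hA (nat r) :: 'p mod_ring poly) (nat e) p (nat d)) \<noteq> 0"
  shows "(r,e,d) \<in> Bset p"
proof -
  have p2: "p \<ge> 2" using prime_p_facts[where 'p='p] p_def by auto
  obtain k where r2: "r \<ge> 2" and e1: "e \<ge> 1" and d1: "1 \<le> d" "d \<le> p"
    and l1: "d*(p-1) \<le> r*e" and l2: "r*e \<le> r*(p-1)" and Npos: "2*r*e*d - d*(d+1)*(p-1) > 0"
    and Nk: "2*r*e*d - d*(d+1)*(p-1) = k*(r*(r-1))" and "p \<noteq> 2 \<longrightarrow> even k" by (rule UsetE[OF U])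
  have ep: "e \<le> p - 1" using l2 r2 by simp
  have "d*(p-1) \<le> r*(p-1)" using l1 l2 by simp
  then have dr: "d \<le> r" using p2 by simp
  have cop: "coprime r p" using cop_small[of r] r2 rp p_def by simp
  have q1: "p mod r \<noteq> 1"
  proof
    assume "p mod r = 1"
    then have "p mod r = 1 mod r" using r2 by simp
    then have "r dvd p - 1" by (simp only: mod_eq_dvd_iff)
    then show False using nd by simp
  qed
  consider "d = r" | "d = r - 1" | "d \<le> r - 2" using dr by linarith
  then show ?thesis
  proof cases
    case 1
    then have "r*(p-1) \<le> r*e" using l1 by (simp add: mult.commute)
    then have "e = p - 1" using r2 ep by simp
    then show ?thesis unfolding Bset_iff using 1 r2 rp by simp
  next
    case 2
    have "2*r*e*d - d*(d+1)*(p-1) = (r*(r-1)) * (2*e - (p-1))" unfolding 2 by (simp add: algebra_simps)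
    then have "(r*(r-1)) * (2*e - (p-1)) > 0" using Npos by simp
    moreover have "r*(r-1) > 0" using r2 by simp
    ultimately have "2*e - (p-1) > 0" by (simp add: zero_less_mult_iff)
    moreover have "r*(p-1-e) \<le> p - 1"
    proof -
      have "r*(p-1-e) = r*(p-1) - r*e" "d*(p-1) = r*(p-1) - (p-1)" unfolding 2 by (simp_all add: algebra_simps)
      then show ?thesis using l1 by linarith
    qed
    ultimately show ?thesis unfolding Bset_iff using 2 r2 rp ep by simp
  next
    case 3
    have "det (Mmat (hA (nat r) :: 'p mod_ring poly) (nat e) p (nat d)) = 0"
      unfolding p_def
      by (rule part3_zero_row) (use r2 cop q1 d1 3 e1 p_def in auto)
    then show ?thesis using det by simp
  qed
qed

lemma part3_bwd:
  fixes r e d :: int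
  defines "p \<equiv> int CARD('p::prime_card)"
  assumes B: "(r,e,d) \<in> Bset p" and r2: "2 \<le> r" and rp: "r \<le> p - 1" and nd: "\<not> r dvd (p - 1)"
  shows "(r,e,d) \<in> Uset p \<and> det (Mmat (hA (nat r) :: 'p mod_ring poly) (nat e) p (nat d)) \<noteq> 0"
proof -
  have p2: "p \<ge> 2" using prime_p_facts[where 'p='p] p_def by auto
  have p3: "p \<ge> 3" using r2 rp by simp
  have podd: "odd p" using p_odd[where 'p='p] p_def p3 by auto
  have cop: "coprime r p" using cop_small[of r] r2 rp p_def by simp
  show ?thesis
    using B
  proof (cases rule: BsetE)
    case plus
    have N: "2*r*e*d - d*(d+1)*(p-1) = (p-1) * (r*(r-1))" unfolding plus by (simp add: algebra_simps)
    have pos: "(p-1) * (r*(r-1)) > 0" using r2 p2 by simp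
    have par: "p \<noteq> 2 \<longrightarrow> even (p - 1)" using podd by simp
    have U: "(r,e,d) \<in> Uset p"
      by (rule UsetI[OF _ _ _ _ _ _ _ N par]) (use N pos plus r2 rp in auto)
    have "det (Mmat (hA (nat r) :: 'p mod_ring poly) (nat e) p (nat d)) \<noteq> 0"
      unfolding p_def
    proof (rule detA_nz)
      show "d * int CARD('p) \<le> r * (e + 1)" using plus p_def by (simp add: algebra_simps)
    qed (use plus cop r2 rp p_def in auto)
    with U show ?thesis by simp
  next
    case zero
    have N: "2*r*e*d - d*(d+1)*(p-1) = (2*e - p + 1) * (r*(r-1))" unfolding zero by (simp add: algebra_simps)
    have pos: "(2*e - p + 1) * (r*(r-1)) > 0" using r2 zero by simp
    have par: "p \<noteq> 2 \<longrightarrow> even (2*e - p + 1)" using podd by simp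
    have ex: "r*(p-1-e) = r*(p-1) - r*e" "d*(p-1) = r*(p-1) - (p-1)" unfolding zero by (simp_all add: algebra_simps)
    have l1: "d*(p-1) \<le> r*e" using ex zero(5) by linarith
    have l2: "r*e \<le> r*(p-1)" using zero r2 by (intro mult_left_mono) auto
    have U: "(r,e,d) \<in> Uset p"
      by (rule UsetI[OF _ _ _ _ l1 l2 _ N par]) (use N pos zero r2 rp p3 in auto)
    have bnd: "d*p \<le> r*(e+1)"
    proof -
      have "r*(p-1-e) = r*p - r - r*e" "d * p = r*p - p" "r*(e+1) = r*e + r" unfolding zero by (simp_all add: algebra_simps)
      then show ?thesis using zero(5) by linarith
    qed
    have "det (Mmat (hA (nat r) :: 'p mod_ring poly) (nat e) p (nat d)) \<noteq> 0"
      unfolding p_def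
    proof (rule detA_nz)
      show "d * int CARD('p) \<le> r * (e + 1)" using bnd p_def by simp
    qed (use zero cop r2 rp p_def in auto)
    with U show ?thesis by simp
  next
    case minus
    then have "r dvd p - 1" by (metis dvd_triv_left)
    then show ?thesis using nd by simp
  qed
qed

lemma set_triple_eq:
  "(\<And>r e d. P r e d \<longleftrightarrow> Q r e d) \<Longrightarrow> {(r,e,d). P r e d} = {(r,e,d). Q r e d}"
  by auto

theorem lemma6:
  fixes ty :: "'p::prime_card itself"
  defines "p \<equiv> int CARD('p)"
  shows
   "{(r,e,d) \<in> Uset p. p dvd r \<and>
        det (Mmat (hB (nat r) :: 'p mod_ring poly) (nat e) p (nat d)) \<noteq> 0}
      = {(r,e,d) \<in> Bset p. p dvd r}
  \<and> {(r,e,d) \<in> Uset p. p < r \<and> \<not> p dvd r \<and>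
        det (Mmat (hA (nat r) :: 'p mod_ring poly) (nat e) p (nat d)) \<noteq> 0}
      = {(r,e,d) \<in> Bset p. p < r \<and> \<not> p dvd r}
  \<and> {(r,e,d) \<in> Uset p. 2 \<le> r \<and> r \<le> p - 1 \<and> \<not> r dvd (p - 1) \<and>
        det (Mmat (hA (nat r) :: 'p mod_ring poly) (nat e) p (nat d)) \<noteq> 0}
      = {(r,e,d) \<in> Bset p. 2 \<le> r \<and> r \<le> p - 1 \<and> \<not> r dvd (p - 1)}"
proof -
  have p2: "p \<ge> 2" using prime_p_facts[where 'p='p] p_def by auto
  have A1: "((r,e,d) \<in> Uset p \<and> p dvd r \<and> det (Mmat (hB (nat r) :: 'p mod_ring poly) (nat e) p (nat d)) \<noteq> 0)
      \<longleftrightarrow> ((r,e,d) \<in> Bset p \<and> p dvd r)" for r e d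
  proof
    assume a: "(r,e,d) \<in> Uset p \<and> p dvd r \<and> det (Mmat (hB (nat r) :: 'p mod_ring poly) (nat e) p (nat d)) \<noteq> 0"
    then have "r = p \<and> e = p - 1 \<and> (d = p \<or> d = p - 1)" using part1_fwd[of r e d] p_def by blast
    then have "(r,e,d) \<in> Bset p" unfolding Bset_iff using p2 by auto
    then show "(r,e,d) \<in> Bset p \<and> p dvd r" using a by blast
  next
    assume a: "(r,e,d) \<in> Bset p \<and> p dvd r"
    then show "(r,e,d) \<in> Uset p \<and> p dvd r \<and> det (Mmat (hB (nat r) :: 'p mod_ring poly) (nat e) p (nat d)) \<noteq> 0"
      using part1_bwd[of r e d] p_def by blast
  qed
  have A2: "((r,e,d) \<in> Uset p \<and> p < r \<and> \<not> p dvd r \<and> det (Mmat (hA (nat r) :: 'p mod_ring poly) (nat e) p (nat d)) \<noteq> 0)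
      \<longleftrightarrow> ((r,e,d) \<in> Bset p \<and> p < r \<and> \<not> p dvd r)" for r e d
  proof
    assume a: "(r,e,d) \<in> Uset p \<and> p < r \<and> \<not> p dvd r \<and> det (Mmat (hA (nat r) :: 'p mod_ring poly) (nat e) p (nat d)) \<noteq> 0"
    then have "r = p + 1 \<and> e = p - 1 \<and> d = p" using part2_fwd[of r e d] p_def by blast
    then have "(r,e,d) \<in> Bset p" unfolding Bset_iff using p2 by auto
    then show "(r,e,d) \<in> Bset p \<and> p < r \<and> \<not> p dvd r" using a by blast
  next
    assume a: "(r,e,d) \<in> Bset p \<and> p < r \<and> \<not> p dvd r"
    then show "(r,e,d) \<in> Uset p \<and> p < r \<and> \<not> p dvd r \<and> det (Mmat (hA (nat r) :: 'p mod_ring poly) (nat e) p (nat d)) \<noteq> 0"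
      using part2_bwd[of r e d] p_def by blast
  qed
  have A3: "((r,e,d) \<in> Uset p \<and> 2 \<le> r \<and> r \<le> p - 1 \<and> \<not> r dvd (p - 1) \<and> det (Mmat (hA (nat r) :: 'p mod_ring poly) (nat e) p (nat d)) \<noteq> 0)
      \<longleftrightarrow> ((r,e,d) \<in> Bset p \<and> 2 \<le> r \<and> r \<le> p - 1 \<and> \<not> r dvd (p - 1))" for r e d
  proof
    assume a: "(r,e,d) \<in> Uset p \<and> 2 \<le> r \<and> r \<le> p - 1 \<and> \<not> r dvd (p - 1) \<and> det (Mmat (hA (nat r) :: 'p mod_ring poly) (nat e) p (nat d)) \<noteq> 0"
    then have "(r,e,d) \<in> Bset p" using part3_fwd[of r e d] p_def by blast
    then show "(r,e,d) \<in> Bset p \<and> 2 \<le> r \<and> r \<le> p - 1 \<and> \<not> r dvd (p - 1)" using a by blast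
  next
    assume a: "(r,e,d) \<in> Bset p \<and> 2 \<le> r \<and> r \<le> p - 1 \<and> \<not> r dvd (p - 1)"
    then show "(r,e,d) \<in> Uset p \<and> 2 \<le> r \<and> r \<le> p - 1 \<and> \<not> r dvd (p - 1) \<and> det (Mmat (hA (nat r) :: 'p mod_ring poly) (nat e) p (nat d)) \<noteq> 0"
      using part3_bwd[of r e d] p_def by blast
  qed
  show ?thesis
    apply (intro conjI)
    subgoal by (rule set_triple_eq, rule A1)
    subgoal by (rule set_triple_eq, rule A2)
    subgoal by (rule set_triple_eq, rule A3)
    done
qed


end
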